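(* Let $k\ge 2$ and let $\mathrm{R}_{2k}=\{a_0,a_1,\dots,a_{2k-1}\}$ be the dihedral quandle of order $2k$, i.e. the set $\mathbb{Z}_{2k}$ with operation $a_i\cdot a_j=a_{(2j-i)\bmod 2k}$. In the integral quandle ring $\mathbb{Z}[\mathrm{R}_{2k}]$, let $e_i=a_i-a_0$ for $i=1,\dots,2k-1$. Then $e_i\cdot e_k=0$ for all $i=1,2,\dots,2k-1$.
   Context: The quandle ring $\mathbb{Z}[A]$ of a quandle $A$ is the free abelian group on $A$ with multiplication given by the bilinear extension of the quandle operation: $\left(\sum_i r_i a_i\right)\cdot\left(\sum_j s_j a_j\right)=\sum_{i,j} r_i s_j (a_i\cdot a_j)$. *)

theory Defs
  imports Main
begin

text \<open>Integral quandle ring of a finite quandle (A, op): elements are integer-valued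
functions on A (the free abelian group on A, as functions supported in A);
multiplication is the bilinear extension of the quandle operation.\<close>

definition qring_mult :: "'a set \<Rightarrow> ('a \<Rightarrow> 'a \<Rightarrow> 'a) \<Rightarrow> ('a \<Rightarrow> int) \<Rightarrow> ('a \<Rightarrow> int) \<Rightarrow> ('a \<Rightarrow> int)" where
  "qring_mult A op x y = (\<lambda>c. \<Sum>a\<in>A. \<Sum>b\<in>A. if op a b = c then x a * y b else 0)"

definition qbasis :: "'a \<Rightarrow> ('a \<Rightarrow> int)" where
  "qbasis a = (\<lambda>c. if c = a then 1 else 0)"

definition dihedral_op :: "nat \<Rightarrow> nat \<Rightarrow> nat \<Rightarrow> nat" where
  "dihedral_op n i j = nat ((2 * int j - int i) mod int n)"

end

theory Submission
  imports Defs
begin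

lemma delta_sum:
  assumes "finite A" "j \<in> A" "l \<in> A"
  shows "(\<Sum>b\<in>A. g b * (qbasis j b - qbasis l b)) = g j - (g l :: int)"
proof -
  have "(\<Sum>b\<in>A. g b * (qbasis j b - qbasis l b)) = (\<Sum>b\<in>A. g b * qbasis j b) - (\<Sum>b\<in>A. g b * qbasis l b)"
    by (simp add: right_diff_distrib sum_subtractf)
  also have "(\<Sum>b\<in>A. g b * qbasis j b) = (\<Sum>b\<in>A. if b = j then g b else 0)"
    by (rule sum.cong) (auto simp: qbasis_def)
  also have "(\<Sum>b\<in>A. g b * qbasis l b) = (\<Sum>b\<in>A. if b = l then g b else 0)"
    by (rule sum.cong) (auto simp: qbasis_def)
  finally show ?thesis using assms by (simp add: sum.delta')
qed

theorem lemma2p2: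
  fixes k i :: nat
  assumes "k \<ge> 2" and "1 \<le> i" and "i \<le> 2 * k - 1"
  shows "qring_mult {0..<2*k} (dihedral_op (2*k))
           (\<lambda>c. qbasis i c - qbasis 0 c) (\<lambda>c. qbasis k c - qbasis 0 c) = (\<lambda>c. 0)"
proof
  fix c
  let ?A = "{0..<2*k}" and ?op = "dihedral_op (2*k)"
  let ?f = "\<lambda>a b. if ?op a b = c then (1::int) else 0"
  have inA: "i \<in> ?A" "0 \<in> ?A" "k \<in> ?A" using assms by auto
  have e1: "?op i k = ?op i 0"
  proof -
    have "(2 * int k - int i) mod int (2*k) = (2 * int 0 - int i) mod int (2*k)"
    proof -
      have "2 * int k - int i = (- int i) + int (2*k)" by simp
      then show ?thesis by (simp only: mod_add_self2) simp
    qed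
    then show ?thesis unfolding dihedral_op_def by simp
  qed
  have e2: "?op 0 k = ?op 0 0" unfolding dihedral_op_def by simp
  have "qring_mult ?A ?op (\<lambda>c. qbasis i c - qbasis 0 c) (\<lambda>c. qbasis k c - qbasis 0 c) c
      = (\<Sum>a\<in>?A. (qbasis i a - qbasis 0 a) * (\<Sum>b\<in>?A. ?f a b * (qbasis k b - qbasis 0 b)))"
    unfolding qring_mult_def by (auto simp: sum_distrib_left intro!: sum.cong)
  also have "\<dots> = (\<Sum>a\<in>?A. (?f a k - ?f a 0) * (qbasis i a - qbasis 0 a))"
    using inA by (subst delta_sum) (auto simp: mult.commute)
  also have "\<dots> = (?f i k - ?f i 0) - (?f 0 k - ?f 0 0)"
    using inA by (subst delta_sum) auto
  also have "\<dots> = 0" using e1 e2 by simp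
  finally show "qring_mult ?A ?op (\<lambda>c. qbasis i c - qbasis 0 c) (\<lambda>c. qbasis k c - qbasis 0 c) c = 0" .
qed

end
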